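(* Let $L^x,L^y>0$, let $i\neq j$ be two boxes, each box $k\in\{i,j\}$ having center $(c^x_k,c^y_k)$, side lengths $(\ell^x_k,\ell^y_k)$ and constants $lb^s_k>0$, $ub^s_k$. Let $$Q^{ub}=\{(c_i,c_j,\ell_i,\ell_j)\in\mathbb{R}^8:\ \tfrac12\ell^s_k\le c^s_k\le L^s-\tfrac12\ell^s_k,\ lb^s_k\le\ell^s_k\le ub^s_k\ \ \forall s\in\{x,y\},k\in\{i,j\}\}.$$ Let $E^8$ be the set of $(c,\ell,z)$ with $(c,\ell)=(c_i,c_j,\ell_i,\ell_j)\in Q^{ub}$, $z=(z^s_{p,q})_{s\in\{x,y\},(p,q)\in\{(i,j),(j,i)\}}\in\{0,1\}^4$ not identically zero, $z^s_{i,j}+z^s_{j,i}\le1$ for each $s$, $z^s_{p,q}=1\Rightarrow\mathscr{B}_p\leftarrow_s\mathscr{B}_q$, and $z^s_{i,j}=z^s_{j,i}=0\Rightarrow(\mathscr{B}_i\not\leftarrow_s\mathscr{B}_j$ and $\mathscr{B}_j\not\leftarrow_s\mathscr{B}_i)$. Let $E^U$ be the set of $(c,\ell,u)$ with $(c,\ell)\in Q^{ub}$, $u=(u^s_{p,q})\in\{0,1\}^4$ having exactly one entry equal to $1$, and $u^s_{p,q}=1\Rightarrow\mathscr{B}_p\leftarrow_s\mathscr{B}_q$. Then for any $\{r,s\}=\{x,y\}$ and $\{p,q\}=\{i,j\}$: (a) $c^s_p+ub^s_q(1-z^s_{q,p})\ge\tfrac12\ell^s_p+\ell^s_q$ holds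 for all points of $E^8$; (b) if $L^s<ub^s_p+ub^s_q$, then $z^r_{p,q}+z^r_{q,p}\ge\dfrac{\ell^s_p+\ell^s_q-L^s}{ub^s_p+ub^s_q-L^s}$ holds for all points of $E^8$, and $u^r_{p,q}+u^r_{q,p}\ge\dfrac{\ell^s_p+\ell^s_q-L^s}{ub^s_p+ub^s_q-L^s}$ holds for all points of $E^U$.
   Context: $\mathscr{B}_p\leftarrow_s\mathscr{B}_q$ means $c^s_p+\tfrac12\ell^s_p\le c^s_q-\tfrac12\ell^s_q$, and $\mathscr{B}_p\not\leftarrow_s\mathscr{B}_q$ means $c^s_p+\tfrac12\ell^s_p\ge c^s_q-\tfrac12\ell^s_q$. $E^8=\operatorname{Em}(Q^{ub},D^8,C^8)$ and $E^U=\operatorname{Em}(Q^{ub},D^4,U^4)$ in the paper's notation. In the paper $ub^s_k=\min\{\sqrt{\alpha_k\beta_k},L^s\}$, $lb^s_k=\beta_k/ub^s_k$. *)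

theory Defs
  imports Complex_Main
begin

datatype axis = X | Y
datatype box = I | J

type_synonym coords = "box \<Rightarrow> axis \<Rightarrow> real"
type_synonym binvars = "axis \<Rightarrow> box \<Rightarrow> box \<Rightarrow> real"

definition left_of :: "coords \<Rightarrow> coords \<Rightarrow> axis \<Rightarrow> box \<Rightarrow> box \<Rightarrow> bool" where
  "left_of c l s p q \<longleftrightarrow> c p s + l p s / 2 \<le> c q s - l q s / 2"

definition not_left_of :: "coords \<Rightarrow> coords \<Rightarrow> axis \<Rightarrow> box \<Rightarrow> box \<Rightarrow> bool" where
  "not_left_of c l s p q \<longleftrightarrow> c p s + l p s / 2 \<ge> c q s - l q s / 2"

definition Q_ub :: "(axis \<Rightarrow> real) \<Rightarrow> coords \<Rightarrow> coords \<Rightarrow> (coords \<times> coords) set" where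
  "Q_ub L lb ub = {(c, l). \<forall>s k. l k s / 2 \<le> c k s \<and> c k s \<le> L s - l k s / 2
                             \<and> lb k s \<le> l k s \<and> l k s \<le> ub k s}"

text \<open>Only the entries z s p q with p \<noteq> q are meaningful (four binary variables).\<close>
definition E8 :: "(axis \<Rightarrow> real) \<Rightarrow> coords \<Rightarrow> coords \<Rightarrow> (coords \<times> coords \<times> binvars) set" where
  "E8 L lb ub = {(c, l, z). (c, l) \<in> Q_ub L lb ub
      \<and> (\<forall>s p q. p \<noteq> q \<longrightarrow> z s p q \<in> {0, 1})
      \<and> (\<exists>s p q. p \<noteq> q \<and> z s p q \<noteq> 0)
      \<and> (\<forall>s. z s I J + z s J I \<le> 1)
      \<and> (\<forall>s p q. p \<noteq> q \<longrightarrow> z s p q = 1 \<longrightarrow> left_of c l s p q)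
      \<and> (\<forall>s. z s I J = 0 \<and> z s J I = 0 \<longrightarrow>
              not_left_of c l s I J \<and> not_left_of c l s J I)}"

definition EU :: "(axis \<Rightarrow> real) \<Rightarrow> coords \<Rightarrow> coords \<Rightarrow> (coords \<times> coords \<times> binvars) set" where
  "EU L lb ub = {(c, l, u). (c, l) \<in> Q_ub L lb ub
      \<and> (\<forall>s p q. p \<noteq> q \<longrightarrow> u s p q \<in> {0, 1})
      \<and> card {(s, p, q). p \<noteq> q \<and> u s p q = 1} = 1
      \<and> (\<forall>s p q. p \<noteq> q \<longrightarrow> u s p q = 1 \<longrightarrow> left_of c l s p q)}"

end

theory Submission
  imports Defs
begin

lemma axis_other: "(a::axis) \<noteq> b \<Longrightarrow> c \<noteq> b \<Longrightarrow> c = a"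
  by (cases a; cases b; cases c) auto

lemma box_pair: "(p::box) \<noteq> q \<Longrightarrow> p0 \<noteq> q0 \<Longrightarrow> (p0 = p \<and> q0 = q) \<or> (p0 = q \<and> q0 = p)"
  by (cases p; cases q; cases p0; cases q0) auto

lemma sep:
  assumes "(c, l) \<in> Q_ub L lb ub" "left_of c l s a b"
  shows "l a s + l b s \<le> L s"
proof -
  have "l a s / 2 \<le> c a s" "c b s \<le> L s - l b s / 2"
    using assms(1) unfolding Q_ub_def by auto
  thus ?thesis using assms(2) unfolding left_of_def by linarith
qed

lemma ratio_bound:
  fixes x a b d :: real
  assumes "d > 0" "x \<ge> 0" "(x \<ge> 1 \<and> a \<le> d) \<or> a \<le> 0"
  shows "a / d \<le> x"
proof (cases "a \<le> 0")
  case True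
  hence "a / d \<le> 0" using assms(1) by (simp add: divide_nonpos_pos)
  thus ?thesis using assms(2) by linarith
next
  case False
  hence "a / d \<le> 1" using assms by auto
  thus ?thesis using assms False by linarith
qed

theorem proposition6p3:
  fixes L :: "axis \<Rightarrow> real" and lb ub :: coords and r s :: axis and p q :: box
  assumes L_pos: "\<And>a. L a > 0"
    and lb_pos: "\<And>k a. lb k a > 0"
    and rs: "r \<noteq> s" and pq: "p \<noteq> q"
  shows "(\<forall>(c, l, z) \<in> E8 L lb ub.
            c p s + ub q s * (1 - z s q p) \<ge> l p s / 2 + l q s)
       \<and> (L s < ub p s + ub q s \<longrightarrow>
            (\<forall>(c, l, z) \<in> E8 L lb ub.
               z r p q + z r q p \<ge> (l p s + l q s - L s) / (ub p s + ub q s - L s))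
          \<and> (\<forall>(c, l, u) \<in> EU L lb ub.
               u r p q + u r q p \<ge> (l p s + l q s - L s) / (ub p s + ub q s - L s)))"
proof (intro conjI impI)
  show "\<forall>(c, l, z) \<in> E8 L lb ub. c p s + ub q s * (1 - z s q p) \<ge> l p s / 2 + l q s"
  proof (clarify)
    fix c l z assume m: "(c, l, z) \<in> E8 L lb ub"
    hence Q: "(c, l) \<in> Q_ub L lb ub" and zb: "z s q p \<in> {0,1}"
      and zl: "z s q p = 1 \<longrightarrow> left_of c l s q p" using pq unfolding E8_def by auto
    have b: "l p s / 2 \<le> c p s" "l q s / 2 \<le> c q s" "l q s \<le> ub q s"
      using Q unfolding Q_ub_def by auto
    show "c p s + ub q s * (1 - z s q p) \<ge> l p s / 2 + l q s"
    proof (cases "z s q p = 1")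
      case True
      thus ?thesis using zl b unfolding left_of_def by auto
    next
      case False
      hence "z s q p = 0" using zb by auto
      thus ?thesis using b by auto
    qed
  qed
next
  assume Ls: "L s < ub p s + ub q s"
  hence d: "ub p s + ub q s - L s > 0" by linarith
  show "\<forall>(c, l, z) \<in> E8 L lb ub.
               z r p q + z r q p \<ge> (l p s + l q s - L s) / (ub p s + ub q s - L s)"
  proof (clarify)
    fix c l z assume m: "(c, l, z) \<in> E8 L lb ub"
    hence Q: "(c, l) \<in> Q_ub L lb ub"
      and zb: "\<And>s p q. p \<noteq> q \<Longrightarrow> z s p q \<in> {0,1}"
      and ex: "\<exists>s p q. p \<noteq> q \<and> z s p q \<noteq> 0"
      and zl: "\<And>s p q. p \<noteq> q \<Longrightarrow> z s p q = 1 \<Longrightarrow> left_of c l s p q"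
      unfolding E8_def by auto
    have ub: "l p s \<le> ub p s" "l q s \<le> ub q s" using Q unfolding Q_ub_def by auto
    obtain s0 p0 q0 where e: "p0 \<noteq> q0" "z s0 p0 q0 \<noteq> 0" using ex by blast
    hence z1: "z s0 p0 q0 = 1" using zb by blast
    have nn: "z r p q \<ge> 0" "z r q p \<ge> 0" using zb[of p q r] zb[of q p r] pq by auto
    have "z r p q + z r q p \<ge> 1 \<or> l p s + l q s \<le> L s"
    proof (cases "s0 = s")
      case True
      have "left_of c l s p0 q0" using zl e z1 True by auto
      hence "l p0 s + l q0 s \<le> L s" using sep Q by blast
      thus ?thesis using box_pair[OF pq e(1)] by auto
    next
      case False
      hence "s0 = r" using axis_other rs by blast
      thus ?thesis using box_pair[OF pq e(1)] z1 nn by auto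
    qed
    thus "z r p q + z r q p \<ge> (l p s + l q s - L s) / (ub p s + ub q s - L s)"
      using ratio_bound[OF d] nn ub by force
  qed
  show "\<forall>(c, l, u) \<in> EU L lb ub.
               u r p q + u r q p \<ge> (l p s + l q s - L s) / (ub p s + ub q s - L s)"
  proof (clarify)
    fix c l z assume m: "(c, l, z) \<in> EU L lb ub"
    hence Q: "(c, l) \<in> Q_ub L lb ub"
      and zb: "\<And>s p q. p \<noteq> q \<Longrightarrow> z s p q \<in> {0,1}"
      and cd: "card {(s, p, q). p \<noteq> q \<and> z s p q = 1} = 1"
      and zl: "\<And>s p q. p \<noteq> q \<Longrightarrow> z s p q = 1 \<Longrightarrow> left_of c l s p q"
      unfolding EU_def by auto
    have ub: "l p s \<le> ub p s" "l q s \<le> ub q s" using Q unfolding Q_ub_def by auto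
    have "{(s, p, q). p \<noteq> q \<and> z s p q = 1} \<noteq> {}" using cd by (metis card.empty zero_neq_one)
    then obtain s0 p0 q0 where e: "p0 \<noteq> q0" and z1: "z s0 p0 q0 = 1" by blast
    have nn: "z r p q \<ge> 0" "z r q p \<ge> 0" using zb[of p q r] zb[of q p r] pq by auto
    have "z r p q + z r q p \<ge> 1 \<or> l p s + l q s \<le> L s"
    proof (cases "s0 = s")
      case True
      have "left_of c l s p0 q0" using zl e z1 True by auto
      hence "l p0 s + l q0 s \<le> L s" using sep Q by blast
      thus ?thesis using box_pair[OF pq e(1)] by auto
    next
      case False
      hence "s0 = r" using axis_other rs by blast
      thus ?thesis using box_pair[OF pq e(1)] z1 nn by auto
    qed
    thus "z r p q + z r q p \<ge> (l p s + l q s - L s) / (ub p s + ub q s - L s)"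
      using ratio_bound[OF d] nn ub by force
  qed
qed

end
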